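(* Consider the integer linear program in variables $\mathbf{c}=(c_1,\ldots,c_d)\in\mathbb{Z}^d$: $$\text{maximize } c_1+\cdots+c_d-1 \quad\text{subject to}\quad 0\le c_i\le nr\ (i\in[d]),\qquad \sum_{i\in S}c_i\le\sum_{\lambda\cap S\neq\emptyset}|N_\lambda|\ \ (S\subseteq[d]).$$ Let $\mathbf{c}^{(0)}=0\in\mathbb{Z}^d$. For $t=1,\ldots,r$, let $\mathbf{c}^{(t)}\in\mathbb{Z}^d$ satisfy the following, where $\mathbf{c}^{(t)}$ is always chosen to satisfy all constraints $\sum_{i\in S}c^{(t)}_i\le\sum_{\lambda\cap S\ne\emptyset}|N_\lambda|$: - $c_i^{(t-1)}\le c_i^{(t)}\le c_i^{(t-1)}+n$ for all $i\in[d]$; - whenever $c_i^{(t)}<c_i^{(t-1)}+n$, there exists $S\subseteq[d]$ with $i\in S$ and $\sum_{j\in S}c_j^{(t)}=\sum_{\lambda\cap S\neq\emptyset}|N_\lambda|$. Then $\mathbf{c}^{(r)}$ is an optimal solution of the integer linear program.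
   Context: Let $[d]=\{1,\ldots,d\}$, and let $n,r,d$ be positive integers. For a partition $\lambda$ of $d$ with at most $n$ parts, $N_\lambda$ is the set of index vectors $(i_1,\ldots,i_n)\in\mathbb{Z}_{\ge0}^n$ whose multiset of nonzero entries equals $\lambda$. The sum $\sum_{\lambda\cap S\neq\emptyset}$ ranges over the partitions $\lambda$ of $d$ of length at most $n$ having at least one part in $S$. *)

theory Defs
  imports Main "HOL-Library.Multiset"
begin

definition partitions_le :: "nat \<Rightarrow> nat \<Rightarrow> nat multiset set" where
  "partitions_le n d = {lam. (\<forall>x\<in>#lam. 0 < x) \<and> sum_mset lam = d \<and> size lam \<le> n}"

definition Nset :: "nat \<Rightarrow> nat multiset \<Rightarrow> nat list set" where
  "Nset n lam = {v. length v = n \<and> mset (filter (\<lambda>x. x \<noteq> 0) v) = lam}"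

definition rhs :: "nat \<Rightarrow> nat \<Rightarrow> nat set \<Rightarrow> int" where
  "rhs n d S = (\<Sum>lam\<in>{lam \<in> partitions_le n d. set_mset lam \<inter> S \<noteq> {}}. int (card (Nset n lam)))"

definition ilp_feasible :: "nat \<Rightarrow> nat \<Rightarrow> nat \<Rightarrow> (nat \<Rightarrow> int) \<Rightarrow> bool" where
  "ilp_feasible n r d c \<longleftrightarrow>
     (\<forall>i\<in>{1..d}. 0 \<le> c i \<and> c i \<le> int (n * r)) \<and>
     (\<forall>S. S \<subseteq> {1..d} \<longrightarrow> (\<Sum>i\<in>S. c i) \<le> rhs n d S)"

definition ilp_objective :: "nat \<Rightarrow> (nat \<Rightarrow> int) \<Rightarrow> int" where
  "ilp_objective d c = (\<Sum>i=1..d. c i) - 1"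

definition ilp_optimal :: "nat \<Rightarrow> nat \<Rightarrow> nat \<Rightarrow> (nat \<Rightarrow> int) \<Rightarrow> bool" where
  "ilp_optimal n r d c \<longleftrightarrow> ilp_feasible n r d c \<and>
     (\<forall>c'. ilp_feasible n r d c' \<longrightarrow> ilp_objective d c' \<le> ilp_objective d c)"

end

theory Submission
  imports Defs
begin

lemma fin_parts: "finite (partitions_le n d)"
proof -
  have "partitions_le n d \<subseteq> mset ` {xs. set xs \<subseteq> {0..d} \<and> length xs \<le> n}"
  proof
    fix lam assume a: "lam \<in> partitions_le n d"
    then have s: "sum_mset lam = d" "size lam \<le> n" by (auto simp: partitions_le_def)
    obtain xs where xs: "mset xs = lam" by (metis ex_mset)
    have "set xs \<subseteq> {0..d}"
    proof
      fix x assume "x \<in> set xs"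
      then have "x \<le> sum_list xs" by (rule member_le_sum_list) auto
      then have "x \<le> sum_mset lam" using xs sum_mset_sum_list[of xs] by simp
      then show "x \<in> {0..d}" using s by auto
    qed
    moreover have "length xs \<le> n" using xs s by auto
    ultimately show "lam \<in> mset ` {xs. set xs \<subseteq> {0..d} \<and> length xs \<le> n}" using xs by blast
  qed
  moreover have "finite {xs. set xs \<subseteq> {0..d::nat} \<and> length xs \<le> n}"
    by (rule finite_lists_length_le) auto
  ultimately show ?thesis by (meson finite_imageI finite_subset)
qed

lemma rhs_alt: "rhs n d S = (\<Sum>lam\<in>partitions_le n d.
   (if set_mset lam \<inter> S \<noteq> {} then int (card (Nset n lam)) else 0))"
  unfolding rhs_def using fin_parts by (simp add: sum.inter_filter)

lemma rhs_empty: "rhs n d {} = 0"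
  unfolding rhs_alt by simp

lemma rhs_submod: "rhs n d (A \<union> B) + rhs n d (A \<inter> B) \<le> rhs n d A + rhs n d B"
  unfolding rhs_alt sum.distrib[symmetric]
  by (rule sum_mono) auto

theorem theorem5p4:
  fixes n r d :: nat and c :: "nat \<Rightarrow> nat \<Rightarrow> int"
  assumes "0 < n" and "0 < r" and "0 < d"
    and init: "\<forall>i\<in>{1..d}. c 0 i = 0"
    and constr: "\<forall>t\<in>{1..r}. \<forall>S. S \<subseteq> {1..d} \<longrightarrow> (\<Sum>i\<in>S. c t i) \<le> rhs n d S"
    and step: "\<forall>t\<in>{1..r}. \<forall>i\<in>{1..d}. c (t - 1) i \<le> c t i \<and> c t i \<le> c (t - 1) i + int n"
    and tight: "\<forall>t\<in>{1..r}. \<forall>i\<in>{1..d}. c t i < c (t - 1) i + int n \<longrightarrow>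
                  (\<exists>S. S \<subseteq> {1..d} \<and> i \<in> S \<and> (\<Sum>j\<in>S. c t j) = rhs n d S)"
  shows "ilp_optimal n r d (c r)"
proof -
  have mono: "c t i \<le> c r i" if "t \<le> r" "i \<in> {1..d}" for t i
    using that
  proof (induction "r - t" arbitrary: t)
    case 0 then show ?case by simp
  next
    case (Suc k)
    then have "c t i \<le> c (Suc t) i" using step[rule_format, of "Suc t" i] by auto
    moreover have "c (Suc t) i \<le> c r i" using Suc by auto
    ultimately show ?case by linarith
  qed
  have bounds: "0 \<le> c t i \<and> c t i \<le> int (t * n)" if "t \<le> r" "i \<in> {1..d}" for t i
    using that
  proof (induction t)
    case 0 then show ?case using init by auto
  next
    case (Suc t)
    then show ?case using step[rule_format, of "Suc t" i] by (auto simp: algebra_simps)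
  qed
  have cr: "\<And>S. S \<subseteq> {1..d} \<Longrightarrow> (\<Sum>i\<in>S. c r i) \<le> rhs n d S"
    using constr assms(2) by auto
  define Tt where "Tt = {S. S \<subseteq> {1..d} \<and> (\<Sum>j\<in>S. c r j) = rhs n d S}"
  have Ttfin: "finite Tt" unfolding Tt_def by (rule finite_subset[of _ "Pow {1..d}"]) auto
  have "{} \<in> Tt" unfolding Tt_def by (simp add: rhs_empty)
  have un: "A \<union> B \<in> Tt" if "A \<in> Tt" "B \<in> Tt" for A B
  proof -
    have A: "A \<subseteq> {1..d}" "(\<Sum>j\<in>A. c r j) = rhs n d A" using that unfolding Tt_def by auto
    have B: "B \<subseteq> {1..d}" "(\<Sum>j\<in>B. c r j) = rhs n d B" using that unfolding Tt_def by auto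
    have fA: "finite A" "finite B" using A B finite_subset by auto
    have e: "(\<Sum>j\<in>A \<union> B. c r j) + (\<Sum>j\<in>A \<inter> B. c r j) = (\<Sum>j\<in>A. c r j) + (\<Sum>j\<in>B. c r j)"
      using sum.union_inter[OF fA] .
    have "(\<Sum>j\<in>A \<union> B. c r j) \<le> rhs n d (A \<union> B)" using cr A B by auto
    moreover have "(\<Sum>j\<in>A \<inter> B. c r j) \<le> rhs n d (A \<inter> B)" using cr[of "A \<inter> B"] A by auto
    moreover note rhs_submod[of n d A B]
    ultimately have "(\<Sum>j\<in>A \<union> B. c r j) = rhs n d (A \<union> B)" using e A B by linarith
    then show ?thesis using A B unfolding Tt_def by auto
  qed
  have "Max (card ` Tt) \<in> card ` Tt" using Ttfin \<open>{} \<in> Tt\<close> by (intro Max_in) auto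
  then obtain T where T: "T \<in> Tt" and Tm: "card T = Max (card ` Tt)" by auto
  have sub: "S \<subseteq> T" if "S \<in> Tt" for S
  proof -
    have "S \<union> T \<in> Tt" using un[OF that T] .
    then have "card (S \<union> T) \<le> card T" using Tm Ttfin by simp
    moreover have "S \<union> T \<subseteq> {1..d}" using \<open>S \<union> T \<in> Tt\<close> unfolding Tt_def by auto
    then have "finite (S \<union> T)" using finite_subset by blast
    ultimately have "S \<union> T = T" by (metis Un_upper2 card_seteq)
    then show ?thesis by blast
  qed
  have Td: "T \<subseteq> {1..d}" and Tr: "(\<Sum>j\<in>T. c r j) = rhs n d T" using T unfolding Tt_def by auto
  have full: "c t i = int (t * n)" if "t \<le> r" "i \<in> {1..d} - T" for t i
    using that
  proof (induction t)
    case 0 then show ?case using init by auto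
  next
    case (Suc t)
    have "c (Suc t) i = c t i + int n"
    proof (rule ccontr)
      assume "c (Suc t) i \<noteq> c t i + int n"
      then have "c (Suc t) i < c t i + int n" using step[rule_format, of "Suc t" i] Suc by auto
      then obtain S where S: "S \<subseteq> {1..d}" "i \<in> S" "(\<Sum>j\<in>S. c (Suc t) j) = rhs n d S"
        using tight[rule_format, of "Suc t" i] Suc by auto
      have "(\<Sum>j\<in>S. c (Suc t) j) \<le> (\<Sum>j\<in>S. c r j)"
        using S(1) Suc(2) by (intro sum_mono mono) auto
      then have "S \<in> Tt" using cr[OF S(1)] S unfolding Tt_def by auto
      then show False using sub S Suc by auto
    qed
    then show ?case using Suc by (auto simp: algebra_simps)
  qed
  have feas: "ilp_feasible n r d (c r)"
  proof -
    have "0 \<le> c r i \<and> c r i \<le> int (n * r)" if "i \<in> {1..d}" for i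
      using bounds[of r i] that by (simp add: mult.commute)
    then show ?thesis unfolding ilp_feasible_def using cr by blast
  qed
  show ?thesis unfolding ilp_optimal_def
  proof (intro conjI allI impI feas)
    fix c' assume f': "ilp_feasible n r d c'"
    have split: "(\<Sum>i=1..d. g i) = (\<Sum>i\<in>T. g i) + (\<Sum>i\<in>{1..d} - T. g i)" for g :: "nat \<Rightarrow> int"
      using Td by (metis add.commute finite_atLeastAtMost sum.subset_diff)
    have "(\<Sum>i\<in>T. c' i) \<le> rhs n d T" using f' Td unfolding ilp_feasible_def by auto
    moreover have "(\<Sum>i\<in>{1..d} - T. c' i) \<le> (\<Sum>i\<in>{1..d} - T. c r i)"
      using f' full[of r] unfolding ilp_feasible_def by (intro sum_mono) (auto simp: mult.commute)
    ultimately show "ilp_objective d c' \<le> ilp_objective d (c r)"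
      unfolding ilp_objective_def using split[of c'] split[of "c r"] Tr by linarith
  qed
qed

end
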